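(* Assume each operator $L_r:Lip_d(I)\to Lip_d(I)$, $r\in\mathbb{N}$, is continuous. Then the non-stationary fractal operator $\mathfrak{F}^\alpha_b:Lip_d(I)\to C(I)$, $\mathfrak{F}^\alpha_b(f)=f^\alpha_b$, is continuous.
   Context: Setting: $I=[x_0,x_N]$ with partition $\Delta: x_0<x_1<\dots<x_N$, $I_i=[x_{i-1},x_i]$, $l_i:I\to I_i$ the increasing affine bijection $l_i(x)=\frac{x_i-x_{i-1}}{x_N-x_0}x+\frac{x_Nx_{i-1}-x_0x_i}{x_N-x_0}$, and $Q_i=l_i^{-1}$. Scaling functions $\alpha_{i,r}:I\to\mathbb{R}$ ($i=1,\dots,N$, $r\in\mathbb{N}$) are continuous with $\|\alpha\|_\infty:=\sup_{r}\max_i\|\alpha_{i,r}\|_\infty<1$. $Lip_d(I)$ ($0<d\le1$) is the space of real functions $g$ on $I$ with $\sup_{x\ne y}|g(x)-g(y)|/|x-y|^d<\infty$, regarded as a subset of $C(I)$ with the supremum norm (all topologies here are those of the supremum norm). $L_r:Lip_d(I)\to Lip_d(I)$ ($r\in\mathbb{N}$) are operators (not necessarily linear) with $(L_rg)(x_0)=g(x_0)$, $(L_rg)(x_N)=g(x_N)$ for all $g$, and $\sup_r\|L_r\|_\infty<\infty$, where $\|L_r\|_\infty=\sup_{g\ne0}\|L_rg\|_\infty/\|g\|_\infty$. Non-stationary $\alpha$-fractal function: for $f\in C(I)$ and base functions $b_r\in C(I)$ with $b_r(x_0)=f(x_0)$, $b_r(x_N)=f(x_N)$, $\sup_r\|b_r\|_\infty<\infty$,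 let $C_f(I)=\{g\in C(I):g(x_0)=f(x_0),g(x_N)=f(x_N)\}$ and $T^{\alpha_r}:C_f(I)\to C_f(I)$, $(T^{\alpha_r}g)(x)=f(x)+\alpha_{i,r}(Q_i(x))(g-b_r)(Q_i(x))$ for $x\in I_i$. For every $g\in C_f(I)$, $T^{\alpha_1}\circ\cdots\circ T^{\alpha_r}g$ converges uniformly as $r\to\infty$ to a function independent of $g$; this is the non-stationary $\alpha$-fractal function. $f^\alpha_b$ denotes it for $f\in Lip_d(I)$ with $b_r=L_rf$. *)

theory Defs
  imports "HOL-Analysis.Analysis"
begin

text \<open>Partition x 0 < x 1 < ... < x N of I = [x 0, x N]; functions on I are
modelled as total functions real \<Rightarrow> real, only their values on I matter.\<close>

definition lip_on :: "real \<Rightarrow> real set \<Rightarrow> (real \<Rightarrow> real) \<Rightarrow> bool" where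
  "lip_on d S g \<longleftrightarrow> (\<exists>K. \<forall>s\<in>S. \<forall>t\<in>S. \<bar>g s - g t\<bar> \<le> K * \<bar>s - t\<bar> powr d)"

definition sup_dist :: "real set \<Rightarrow> (real \<Rightarrow> real) \<Rightarrow> (real \<Rightarrow> real) \<Rightarrow> real" where
  "sup_dist S g h = (SUP t\<in>S. \<bar>g t - h t\<bar>)"

definition lmap :: "(nat \<Rightarrow> real) \<Rightarrow> nat \<Rightarrow> nat \<Rightarrow> real \<Rightarrow> real" where
  "lmap x N i t = (x i - x (i - 1)) / (x N - x 0) * t
                   + (x N * x (i - 1) - x 0 * x i) / (x N - x 0)"

definition Qmap :: "(nat \<Rightarrow> real) \<Rightarrow> nat \<Rightarrow> nat \<Rightarrow> real \<Rightarrow> real" where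
  "Qmap x N i t = x 0 + (x N - x 0) * (t - x (i - 1)) / (x i - x (i - 1))"

text \<open>Index i with t \<in> I_i = [x(i-1), x i] (the smallest one at knots).\<close>
definition piece :: "(nat \<Rightarrow> real) \<Rightarrow> real \<Rightarrow> nat" where
  "piece x t = (LEAST i. 1 \<le> i \<and> t \<le> x i)"

definition Top :: "(nat \<Rightarrow> real) \<Rightarrow> nat \<Rightarrow> (nat \<Rightarrow> nat \<Rightarrow> real \<Rightarrow> real) \<Rightarrow> nat
     \<Rightarrow> (real \<Rightarrow> real) \<Rightarrow> (real \<Rightarrow> real) \<Rightarrow> (real \<Rightarrow> real) \<Rightarrow> real \<Rightarrow> real" where
  "Top x N \<alpha> r f b g t =
     (if t \<in> {x 0 .. x N} then
        (let i = piece x t; q = Qmap x N i t in f t + \<alpha> i r q * (g q - b q))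
      else f t)"

text \<open>Tcomp r g = (T^{alpha_1} o ... o T^{alpha_r}) g, with b_r = L r f.\<close>
fun Tcomp :: "(nat \<Rightarrow> real) \<Rightarrow> nat \<Rightarrow> (nat \<Rightarrow> nat \<Rightarrow> real \<Rightarrow> real)
     \<Rightarrow> (nat \<Rightarrow> (real \<Rightarrow> real) \<Rightarrow> (real \<Rightarrow> real)) \<Rightarrow> (real \<Rightarrow> real)
     \<Rightarrow> nat \<Rightarrow> (real \<Rightarrow> real) \<Rightarrow> real \<Rightarrow> real" where
  "Tcomp x N \<alpha> L f 0 g = g"
| "Tcomp x N \<alpha> L f (Suc r) g =
     Tcomp x N \<alpha> L f r (Top x N \<alpha> (Suc r) f (L (Suc r) f) g)"

definition fractal :: "(nat \<Rightarrow> real) \<Rightarrow> nat \<Rightarrow> (nat \<Rightarrow> nat \<Rightarrow> real \<Rightarrow> real)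
     \<Rightarrow> (nat \<Rightarrow> (real \<Rightarrow> real) \<Rightarrow> (real \<Rightarrow> real)) \<Rightarrow> (real \<Rightarrow> real) \<Rightarrow> real \<Rightarrow> real" where
  "fractal x N \<alpha> L f t = lim (\<lambda>r. Tcomp x N \<alpha> L f r f t)"

end

theory Submission
  imports Defs
begin

lemma x_mono:
  assumes part: "\<And>i. i < N \<Longrightarrow> x i < x (Suc i)"
  shows "i < j \<Longrightarrow> j \<le> N \<Longrightarrow> (x::nat\<Rightarrow>real) i < x j"
proof (induction j)
  case 0 then show ?case by simp
next
  case (Suc j)
  show ?case
  proof (cases "i = j")
    case True then show ?thesis using part Suc by simp
  next
    case False
    then have "x i < x j" using Suc by simp
    also have "x j < x (Suc j)" using part Suc by simp
    finally show ?thesis .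
  qed
qed

lemma piece_props:
  assumes N: "N \<ge> 1" and part: "\<And>i. i < N \<Longrightarrow> x i < x (Suc i)"
    and t: "t \<in> {x 0 .. x N}"
  shows "1 \<le> piece x t \<and> piece x t \<le> N \<and> x (piece x t - 1) \<le> t \<and> t \<le> x (piece x t)
     \<and> x (piece x t - 1) < x (piece x t)"
proof -
  let ?i = "piece x t"
  have ex: "1 \<le> N \<and> t \<le> x N" using N t by simp
  have i1: "1 \<le> ?i \<and> t \<le> x ?i" unfolding piece_def by (rule LeastI[of _ N], rule ex)
  have iN: "?i \<le> N" unfolding piece_def by (rule Least_le, rule ex)
  have lo: "x (?i - 1) \<le> t"
  proof (cases "?i = 1")
    case True then show ?thesis using t by simp
  next
    case False
    then have "?i - 1 < ?i" using i1 by simp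
    then have "\<not> (1 \<le> ?i - 1 \<and> t \<le> x (?i - 1))"
      using not_less_Least[of "?i - 1" "\<lambda>i. 1 \<le> i \<and> t \<le> x i"] unfolding piece_def by blast
    moreover have "1 \<le> ?i - 1" using False i1 by linarith
    ultimately show ?thesis by auto
  qed
  have "x (?i - 1) < x ?i" using x_mono[where x=x and N=N, OF part, of "?i-1" ?i] i1 iN by simp
  then show ?thesis using i1 iN lo by simp
qed

lemma Qmap_in:
  assumes N: "N \<ge> 1" and part: "\<And>i. i < N \<Longrightarrow> x i < x (Suc i)"
    and t: "t \<in> {x 0 .. x N}"
  shows "Qmap x N (piece x t) t \<in> {x 0 .. x N}"
proof -
  let ?i = "piece x t"
  define a where "a = x (?i - 1)"
  define b where "b = x ?i"
  have ab: "a \<le> t" "t \<le> b" "a < b" using piece_props[OF N part t] unfolding a_def b_def by auto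
  have x0N: "x 0 < x N" using x_mono[where x=x and N=N, OF part, of 0 N] N by simp
  have q: "Qmap x N ?i t = x 0 + (x N - x 0) * (t - a) / (b - a)"
    unfolding Qmap_def a_def b_def by simp
  have p1: "0 \<le> (x N - x 0) * (t - a) / (b - a)" using ab x0N by simp
  have "(x N - x 0) * (t - a) \<le> (x N - x 0) * (b - a)" using ab x0N by (intro mult_left_mono) auto
  then have p2: "(x N - x 0) * (t - a) / (b - a) \<le> x N - x 0" using ab by (simp add: divide_le_eq)
  show ?thesis using q p1 p2 by simp
qed

lemma Top_diff:
  assumes N: "N \<ge> 1" and part: "\<And>i. i < N \<Longrightarrow> x i < x (Suc i)"
    and t: "t \<in> {x 0 .. x N}" and r: "1 \<le> r"
    and ab: "\<forall>i r t. 1 \<le> i \<and> i \<le> N \<and> 1 \<le> r \<and> t \<in> {x 0 .. x N} \<longrightarrow> \<bar>\<alpha> i r t\<bar> \<le> c"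
    and c: "0 \<le> c"
    and hf: "\<bar>f t - f' t\<bar> \<le> Ef"
    and hg: "\<forall>s\<in>{x 0 .. x N}. \<bar>g s - g' s\<bar> \<le> Kg"
    and hb: "\<forall>s\<in>{x 0 .. x N}. \<bar>b s - b' s\<bar> \<le> Kb"
  shows "\<bar>Top x N \<alpha> r f b g t - Top x N \<alpha> r f' b' g' t\<bar> \<le> Ef + c * (Kg + Kb)"
proof -
  let ?i = "piece x t" let ?q = "Qmap x N ?i t"
  have q: "?q \<in> {x 0 .. x N}" by (rule Qmap_in[OF N part t])
  have ai: "\<bar>\<alpha> ?i r ?q\<bar> \<le> c" using ab piece_props[OF N part t] q r by blast
  have eq: "Top x N \<alpha> r f b g t - Top x N \<alpha> r f' b' g' t
      = (f t - f' t) + \<alpha> ?i r ?q * ((g ?q - g' ?q) - (b ?q - b' ?q))"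
    using t by (simp add: Top_def Let_def algebra_simps)
  have "\<bar>(g ?q - g' ?q) - (b ?q - b' ?q)\<bar> \<le> Kg + Kb"
    using hg hb q abs_triangle_ineq4[of "g ?q - g' ?q" "b ?q - b' ?q"] by fastforce
  then have "\<bar>\<alpha> ?i r ?q * ((g ?q - g' ?q) - (b ?q - b' ?q))\<bar> \<le> c * (Kg + Kb)"
    unfolding abs_mult using ai by (intro mult_mono) auto
  then show ?thesis unfolding eq using hf abs_triangle_ineq[of "f t - f' t"] by linarith
qed

lemma Tcomp_diff:
  assumes N: "N \<ge> 1" and part: "\<And>i. i < N \<Longrightarrow> x i < x (Suc i)"
    and ab: "\<forall>i r t. 1 \<le> i \<and> i \<le> N \<and> 1 \<le> r \<and> t \<in> {x 0 .. x N} \<longrightarrow> \<bar>\<alpha> i r t\<bar> \<le> c"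
    and c: "0 \<le> c"
    and hf: "\<forall>s\<in>{x 0 .. x N}. \<bar>f s - h s\<bar> \<le> \<epsilon>"
    and hL: "\<forall>k. 1 \<le> k \<and> k \<le> r \<longrightarrow> (\<forall>s\<in>{x 0 .. x N}. \<bar>L k f s - L k h s\<bar> \<le> \<beta>)"
    and X: "\<epsilon> + c * (X + \<beta>) \<le> X"
  shows "\<forall>s\<in>{x 0 .. x N}. \<bar>g s - g' s\<bar> \<le> X \<Longrightarrow>
     \<forall>s\<in>{x 0 .. x N}. \<bar>Tcomp x N \<alpha> L f r g s - Tcomp x N \<alpha> L h r g' s\<bar> \<le> X"
  using hL
proof (induction r arbitrary: g g')
  case 0 then show ?case by simp
next
  case (Suc r)
  have "\<forall>s\<in>{x 0 .. x N}. \<bar>Top x N \<alpha> (Suc r) f (L (Suc r) f) g s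
           - Top x N \<alpha> (Suc r) h (L (Suc r) h) g' s\<bar> \<le> X"
  proof
    fix s assume s: "s \<in> {x 0 .. x N}"
    have "\<bar>Top x N \<alpha> (Suc r) f (L (Suc r) f) g s
           - Top x N \<alpha> (Suc r) h (L (Suc r) h) g' s\<bar> \<le> \<epsilon> + c * (X + \<beta>)"
      by (rule Top_diff[OF N part s _ ab c]) (use hf s Suc.prems in auto)
    then show "\<bar>Top x N \<alpha> (Suc r) f (L (Suc r) f) g s
           - Top x N \<alpha> (Suc r) h (L (Suc r) h) g' s\<bar> \<le> X" using X by linarith
  qed
  then show ?case using Suc.IH Suc.prems(2) by simp
qed

lemma Tcomp_contr:
  assumes N: "N \<ge> 1" and part: "\<And>i. i < N \<Longrightarrow> x i < x (Suc i)"
    and ab: "\<forall>i r t. 1 \<le> i \<and> i \<le> N \<and> 1 \<le> r \<and> t \<in> {x 0 .. x N} \<longrightarrow> \<bar>\<alpha> i r t\<bar> \<le> c"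
    and c: "0 \<le> c"
  shows "\<forall>s\<in>{x 0 .. x N}. \<bar>g s - g' s\<bar> \<le> K \<Longrightarrow>
     \<forall>s\<in>{x 0 .. x N}. \<bar>Tcomp x N \<alpha> L f r g s - Tcomp x N \<alpha> L f r g' s\<bar> \<le> c ^ r * K"
proof (induction r arbitrary: g g' K)
  case 0 then show ?case by simp
next
  case (Suc r)
  have "\<forall>s\<in>{x 0 .. x N}. \<bar>Top x N \<alpha> (Suc r) f (L (Suc r) f) g s
           - Top x N \<alpha> (Suc r) f (L (Suc r) f) g' s\<bar> \<le> c * K"
  proof
    fix s assume s: "s \<in> {x 0 .. x N}"
    have "\<bar>Top x N \<alpha> (Suc r) f (L (Suc r) f) g s
           - Top x N \<alpha> (Suc r) f (L (Suc r) f) g' s\<bar> \<le> 0 + c * (K + 0)"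
      by (rule Top_diff[OF N part s _ ab c]) (use s Suc.prems in auto)
    then show "\<bar>Top x N \<alpha> (Suc r) f (L (Suc r) f) g s
           - Top x N \<alpha> (Suc r) f (L (Suc r) f) g' s\<bar> \<le> c * K" by simp
  qed
  from Suc.IH[OF this] show ?case by (simp add: mult.assoc mult.commute mult.left_commute)
qed

fun Tsh :: "(nat \<Rightarrow> real) \<Rightarrow> nat \<Rightarrow> (nat \<Rightarrow> nat \<Rightarrow> real \<Rightarrow> real)
     \<Rightarrow> (nat \<Rightarrow> (real \<Rightarrow> real) \<Rightarrow> (real \<Rightarrow> real)) \<Rightarrow> (real \<Rightarrow> real)
     \<Rightarrow> nat \<Rightarrow> nat \<Rightarrow> (real \<Rightarrow> real) \<Rightarrow> real \<Rightarrow> real" where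
  "Tsh x N \<alpha> L f m 0 g = g"
| "Tsh x N \<alpha> L f m (Suc n) g =
     Tsh x N \<alpha> L f m n (Top x N \<alpha> (Suc (m + n)) f (L (Suc (m + n)) f) g)"

lemma Tcomp_split: "Tcomp x N \<alpha> L f (m + n) g = Tcomp x N \<alpha> L f m (Tsh x N \<alpha> L f m n g)"
  by (induction n arbitrary: g) auto

lemma Tsh_bound:
  assumes N: "N \<ge> 1" and part: "\<And>i. i < N \<Longrightarrow> x i < x (Suc i)"
    and ab: "\<forall>i r t. 1 \<le> i \<and> i \<le> N \<and> 1 \<le> r \<and> t \<in> {x 0 .. x N} \<longrightarrow> \<bar>\<alpha> i r t\<bar> \<le> c"
    and c: "0 \<le> c"
    and hf: "\<forall>s\<in>{x 0 .. x N}. \<bar>f s\<bar> \<le> Bf"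
    and hL: "\<forall>k. 1 \<le> k \<longrightarrow> (\<forall>s\<in>{x 0 .. x N}. \<bar>L k f s\<bar> \<le> Bb)"
    and R: "Bf + c * (R + Bb) \<le> R"
  shows "\<forall>s\<in>{x 0 .. x N}. \<bar>g s\<bar> \<le> R \<Longrightarrow>
     \<forall>s\<in>{x 0 .. x N}. \<bar>Tsh x N \<alpha> L f m n g s\<bar> \<le> R"
proof (induction n arbitrary: g)
  case 0 then show ?case by simp
next
  case (Suc n)
  have "\<forall>s\<in>{x 0 .. x N}. \<bar>Top x N \<alpha> (Suc (m + n)) f (L (Suc (m + n)) f) g s\<bar> \<le> R"
  proof
    fix s assume s: "s \<in> {x 0 .. x N}"
    have "\<bar>Top x N \<alpha> (Suc (m + n)) f (L (Suc (m + n)) f) g s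
        - Top x N \<alpha> (Suc (m + n)) (\<lambda>_. 0) (\<lambda>_. 0) (\<lambda>_. 0) s\<bar> \<le> Bf + c * (R + Bb)"
      by (rule Top_diff[OF N part s _ ab c]) (use s Suc.prems hf hL in auto)
    moreover have "Top x N \<alpha> (Suc (m + n)) (\<lambda>_. 0) (\<lambda>_. 0) (\<lambda>_. 0) s = 0"
      by (simp add: Top_def Let_def)
    ultimately show "\<bar>Top x N \<alpha> (Suc (m + n)) f (L (Suc (m + n)) f) g s\<bar> \<le> R" using R by simp
  qed
  from Suc.IH[OF this] show ?case by simp
qed

lemma seq_lim:
  fixes a :: "nat \<Rightarrow> real"
  assumes c: "0 < c" "c < 1" and C: "0 \<le> C" and h: "\<And>m n. \<bar>a (m + n) - a m\<bar> \<le> c ^ m * C"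
  shows "\<bar>lim a - a m\<bar> \<le> c ^ m * C"
proof -
  have "Cauchy a"
  proof (rule metric_CauchyI)
    fix e :: real assume e: "0 < e"
    have "(\<lambda>n. c ^ n * C) \<longlonglongrightarrow> 0 * C"
      by (intro tendsto_intros LIMSEQ_power_zero) (use c in simp)
    then have "\<forall>\<^sub>F n in sequentially. c ^ n * C < e / 2"
      using order_tendstoD(2)[of _ "0 * C" sequentially "e/2"] e by simp
    then obtain M where M: "c ^ M * C < e / 2" by (meson eventually_sequentially order_refl)
    show "\<exists>M. \<forall>m\<ge>M. \<forall>n\<ge>M. dist (a m) (a n) < e"
    proof (intro exI allI impI)
      fix m n assume mn: "M \<le> m" "M \<le> n"
      have 1: "\<bar>a m - a M\<bar> \<le> c ^ M * C" using h[of M "m - M"] mn by simp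
      have 2: "\<bar>a n - a M\<bar> \<le> c ^ M * C" using h[of M "n - M"] mn by simp
      show "dist (a m) (a n) < e" unfolding dist_real_def using 1 2 M by linarith
    qed
  qed
  then have "convergent a" by (simp add: Cauchy_convergent_iff)
  then have L: "a \<longlonglongrightarrow> lim a" by (simp add: convergent_LIMSEQ_iff)
  have "(\<lambda>n. \<bar>a (n + m) - a m\<bar>) \<longlonglongrightarrow> \<bar>lim a - a m\<bar>"
    using LIMSEQ_ignore_initial_segment[OF L, of m] by (intro tendsto_intros)
  then show ?thesis by (rule LIMSEQ_le_const2) (use h in \<open>metis add.commute\<close>)
qed

lemma lip_bounded:
  assumes "lip_on d {a..b} g" "a \<le> b" "0 < d"
  shows "\<exists>B\<ge>0. \<forall>t\<in>{a..b}. \<bar>g t\<bar> \<le> B"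
proof -
  obtain K where K: "\<forall>s\<in>{a..b}. \<forall>t\<in>{a..b}. \<bar>g s - g t\<bar> \<le> K * \<bar>s - t\<bar> powr d"
    using assms(1) unfolding lip_on_def by blast
  show ?thesis
  proof (intro exI conjI ballI)
    show "0 \<le> \<bar>g a\<bar> + \<bar>K\<bar> * (b - a) powr d" by simp
    fix t assume t: "t \<in> {a..b}"
    have "\<bar>g t - g a\<bar> \<le> K * \<bar>t - a\<bar> powr d" using K[rule_format, OF t, of a] assms(2) by simp
    also have "\<dots> \<le> \<bar>K\<bar> * \<bar>t - a\<bar> powr d" by (intro mult_right_mono) auto
    also have "\<dots> \<le> \<bar>K\<bar> * (b - a) powr d"
      using t assms by (intro mult_left_mono powr_mono2) auto
    finally show "\<bar>g t\<bar> \<le> \<bar>g a\<bar> + \<bar>K\<bar> * (b - a) powr d" by linarith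
  qed
qed

lemma sup_pt:
  assumes "\<forall>t\<in>S. \<bar>u t\<bar> \<le> Bu" "\<forall>t\<in>S. \<bar>v t\<bar> \<le> Bv" "t \<in> S"
  shows "\<bar>u t - v t\<bar> \<le> sup_dist S u v"
  unfolding sup_dist_def
proof (rule cSUP_upper[OF assms(3)])
  show "bdd_above ((\<lambda>t. \<bar>u t - v t\<bar>) ` S)"
  proof (rule bdd_aboveI2)
    fix s assume "s \<in> S"
    then show "\<bar>u s - v s\<bar> \<le> Bu + Bv" using assms(1,2) by fastforce
  qed
qed

lemma sup_le:
  assumes "S \<noteq> {}" "\<forall>t\<in>S. \<bar>u t - v t\<bar> \<le> B"
  shows "sup_dist S u v \<le> B"
  unfolding sup_dist_def using assms by (intro cSUP_least) auto

lemma finite_delta: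
  fixes K :: nat
  assumes "\<And>k. 1 \<le> k \<Longrightarrow> k \<le> K \<Longrightarrow> \<exists>\<delta>>0. P k \<delta>"
    and mono: "\<And>k \<delta> \<delta>'. P k \<delta> \<Longrightarrow> 0 < \<delta>' \<Longrightarrow> \<delta>' \<le> \<delta> \<Longrightarrow> P k \<delta>'"
  shows "\<exists>\<delta>>(0::real). \<forall>k. 1 \<le> k \<and> k \<le> K \<longrightarrow> P k \<delta>"
  using assms(1)
proof (induction K)
  case 0 then show ?case by (intro exI[of _ 1]) auto
next
  case (Suc K)
  obtain \<delta>1 where d1: "\<delta>1 > 0" "\<forall>k. 1 \<le> k \<and> k \<le> K \<longrightarrow> P k \<delta>1" using Suc by force
  obtain \<delta>2 where d2: "\<delta>2 > 0" "P (Suc K) \<delta>2" using Suc.prems[of "Suc K"] by auto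
  show ?case
  proof (intro exI[of _ "min \<delta>1 \<delta>2"] conjI allI impI)
    show "0 < min \<delta>1 \<delta>2" using d1 d2 by simp
    fix k assume k: "1 \<le> k \<and> k \<le> Suc K"
    show "P k (min \<delta>1 \<delta>2)"
    proof (cases "k = Suc K")
      case True then show ?thesis using d1 d2 mono[of "Suc K" \<delta>2] by simp
    next
      case False then show ?thesis using d1 d2 k mono[of k \<delta>1] by simp
    qed
  qed
qed

theorem mainTheorem3:
  fixes x :: "nat \<Rightarrow> real" and N :: nat and d :: real
    and \<alpha> :: "nat \<Rightarrow> nat \<Rightarrow> real \<Rightarrow> real"
    and L :: "nat \<Rightarrow> (real \<Rightarrow> real) \<Rightarrow> (real \<Rightarrow> real)"
  assumes N: "N \<ge> 1"
    and part: "\<And>i. i < N \<Longrightarrow> x i < x (Suc i)"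
    and d: "0 < d" "d \<le> 1"
    and \<alpha>_cont: "\<And>i r. 1 \<le> i \<Longrightarrow> i \<le> N \<Longrightarrow> 1 \<le> r \<Longrightarrow> continuous_on {x 0 .. x N} (\<alpha> i r)"
    and \<alpha>_bound: "\<exists>c<1. \<forall>i r t. 1 \<le> i \<and> i \<le> N \<and> 1 \<le> r \<and> t \<in> {x 0 .. x N}
                     \<longrightarrow> \<bar>\<alpha> i r t\<bar> \<le> c"
    and L_lip: "\<And>r g. 1 \<le> r \<Longrightarrow> lip_on d {x 0 .. x N} g \<Longrightarrow> lip_on d {x 0 .. x N} (L r g)"
    and L_ends: "\<And>r g. 1 \<le> r \<Longrightarrow> lip_on d {x 0 .. x N} g \<Longrightarrow>
                   L r g (x 0) = g (x 0) \<and> L r g (x N) = g (x N)"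
    and L_bound: "\<exists>M. \<forall>r g. 1 \<le> r \<and> lip_on d {x 0 .. x N} g \<and> (\<exists>t\<in>{x 0 .. x N}. g t \<noteq> 0)
                     \<longrightarrow> sup_dist {x 0 .. x N} (L r g) (\<lambda>_. 0) \<le> M * sup_dist {x 0 .. x N} g (\<lambda>_. 0)"
    and L_cont: "\<And>r g e. 1 \<le> r \<Longrightarrow> lip_on d {x 0 .. x N} g \<Longrightarrow> e > 0 \<Longrightarrow>
                   \<exists>\<delta>>0. \<forall>h. lip_on d {x 0 .. x N} h \<and> sup_dist {x 0 .. x N} g h < \<delta>
                         \<longrightarrow> sup_dist {x 0 .. x N} (L r g) (L r h) < e"
  shows "\<forall>f. lip_on d {x 0 .. x N} f \<longrightarrow> (\<forall>e>0. \<exists>\<delta>>0. \<forall>h. lip_on d {x 0 .. x N} h \<and>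
            sup_dist {x 0 .. x N} f h < \<delta> \<longrightarrow>
            sup_dist {x 0 .. x N} (fractal x N \<alpha> L f) (fractal x N \<alpha> L h) < e)"
proof (intro allI impI)
  let ?S = "{x 0 .. x N}"
  fix f :: "real \<Rightarrow> real" and e :: real
  assume lf: "lip_on d ?S f" and e: "0 < e"
  have x0N: "x 0 < x N" using x_mono[where x=x and N=N, OF part, of 0 N] N by simp
  have Sne: "?S \<noteq> {}" using x0N by simp
  have bdd: "\<And>g. lip_on d ?S g \<Longrightarrow> \<exists>B\<ge>0. \<forall>t\<in>?S. \<bar>g t\<bar> \<le> B"
    using lip_bounded x0N d(1) by (metis less_imp_le)
  have pt: "\<And>u v t. lip_on d ?S u \<Longrightarrow> lip_on d ?S v \<Longrightarrow> t \<in> ?S \<Longrightarrow> \<bar>u t - v t\<bar> \<le> sup_dist ?S u v"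
  proof -
    fix u v t assume "lip_on d ?S u" "lip_on d ?S v" "t \<in> ?S"
    then show "\<bar>u t - v t\<bar> \<le> sup_dist ?S u v" using bdd sup_pt by metis
  qed
  have lipc: "\<And>a. lip_on d ?S (\<lambda>_. a)" unfolding lip_on_def by (intro exI[of _ 0]) simp
  obtain c0 where c0: "c0 < 1" and ab0: "\<forall>i r t. 1 \<le> i \<and> i \<le> N \<and> 1 \<le> r \<and> t \<in> ?S \<longrightarrow> \<bar>\<alpha> i r t\<bar> \<le> c0"
    using \<alpha>_bound by blast
  define c where "c = max c0 (1/2)"
  have c: "0 < c" "c < 1" using c0 unfolding c_def by auto
  have ab: "\<forall>i r t. 1 \<le> i \<and> i \<le> N \<and> 1 \<le> r \<and> t \<in> ?S \<longrightarrow> \<bar>\<alpha> i r t\<bar> \<le> c"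
    using ab0 unfolding c_def by force
  obtain M where M: "\<forall>r g. 1 \<le> r \<and> lip_on d ?S g \<and> (\<exists>t\<in>?S. g t \<noteq> 0)
      \<longrightarrow> sup_dist ?S (L r g) (\<lambda>_. 0) \<le> M * sup_dist ?S g (\<lambda>_. 0)"
    using L_bound by blast
  have sup_const: "\<And>a. sup_dist ?S (\<lambda>_. a) (\<lambda>_. 0) = \<bar>a\<bar>"
    unfolding sup_dist_def using Sne by simp
  have M0: "0 \<le> M"
  proof -
    have "\<bar>L 1 (\<lambda>_. 1) (x 0)\<bar> = \<bar>L 1 (\<lambda>_. 1) (x 0) - (\<lambda>_. 0) (x 0)\<bar>" by simp
    also have "\<dots> \<le> sup_dist ?S (L 1 (\<lambda>_. 1)) (\<lambda>_. 0)"
      by (rule pt) (use L_lip lipc x0N in auto)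
    also have "\<dots> \<le> M * sup_dist ?S (\<lambda>_. 1) (\<lambda>_. 0)"
      using M[rule_format, of 1 "\<lambda>_. 1"] lipc x0N by force
    finally show ?thesis using sup_const[of 1] by simp
  qed
  have LB: "\<And>g B k. lip_on d ?S g \<Longrightarrow> 1 \<le> (k::nat) \<Longrightarrow> 0 \<le> B \<Longrightarrow> \<forall>t\<in>?S. \<bar>g t\<bar> \<le> B
      \<Longrightarrow> \<forall>t\<in>?S. \<bar>L k g t\<bar> \<le> M * B"
  proof (intro ballI)
    fix g B and k :: nat and t assume lg: "lip_on d ?S g" and k: "1 \<le> k" and B: "0 \<le> B"
      and gB: "\<forall>t\<in>?S. \<bar>g t\<bar> \<le> B" and t: "t \<in> ?S"
    show "\<bar>L k g t\<bar> \<le> M * B"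
    proof (cases "\<exists>t\<in>?S. g t \<noteq> 0")
      case True
      have "\<bar>L k g t\<bar> = \<bar>L k g t - (\<lambda>_. 0) t\<bar>" by simp
      also have "\<dots> \<le> sup_dist ?S (L k g) (\<lambda>_. 0)"
        by (rule pt) (use L_lip lipc lg k t in auto)
      also have "\<dots> \<le> M * sup_dist ?S g (\<lambda>_. 0)" using M True lg k by blast
      also have "\<dots> \<le> M * B" using M0 sup_le[OF Sne, of g "\<lambda>_. 0" B] gB
        by (intro mult_left_mono) auto
      finally show ?thesis .
    next
      case False
      have "\<bar>L k g t\<bar> \<le> 0 + z" if z: "0 < z" for z
      proof -
        obtain \<delta> where \<delta>: "\<delta> > 0" and h\<delta>: "\<forall>h. lip_on d ?S h \<and> sup_dist ?S g h < \<delta>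
                         \<longrightarrow> sup_dist ?S (L k g) (L k h) < z/2"
          using L_cont[OF k lg, of "z/2"] z by auto
        define \<epsilon> where "\<epsilon> = min (\<delta>/2) (z / (2 * (M + 1)))"
        have \<epsilon>: "0 < \<epsilon>" "\<epsilon> < \<delta>" "\<epsilon> \<le> z / (2 * (M + 1))"
          unfolding \<epsilon>_def using \<delta> z M0 by auto
        have "sup_dist ?S g (\<lambda>_. \<epsilon>) \<le> \<epsilon>"
          by (rule sup_le[OF Sne]) (use False \<epsilon> in auto)
        then have 1: "sup_dist ?S (L k g) (L k (\<lambda>_. \<epsilon>)) < z/2"
          using h\<delta> lipc \<epsilon> by fastforce
        have 2: "\<bar>L k g t - L k (\<lambda>_. \<epsilon>) t\<bar> < z/2"
          using pt[of "L k g" "L k (\<lambda>_. \<epsilon>)" t] L_lip[OF k] lg lipc t 1 by fastforce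
        have "\<bar>L k (\<lambda>_. \<epsilon>) t\<bar> = \<bar>L k (\<lambda>_. \<epsilon>) t - (\<lambda>_. 0) t\<bar>" by simp
        also have "\<dots> \<le> sup_dist ?S (L k (\<lambda>_. \<epsilon>)) (\<lambda>_. 0)"
          by (rule pt) (use L_lip lipc k t in auto)
        also have "\<dots> \<le> M * sup_dist ?S (\<lambda>_. \<epsilon>) (\<lambda>_. 0)"
          using M[rule_format, of k "\<lambda>_. \<epsilon>"] lipc x0N k \<epsilon> by force
        also have "\<dots> = M * \<epsilon>" using sup_const[of \<epsilon>] \<epsilon> by simp
        also have "\<dots> \<le> M * (z / (2 * (M + 1)))" using M0 \<epsilon> by (intro mult_left_mono) auto
        also have "\<dots> \<le> z / 2" using M0 z by (simp add: field_simps)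
        finally show ?thesis using 2 by linarith
      qed
      then have "\<bar>L k g t\<bar> \<le> 0" by (rule field_le_epsilon)
      then show ?thesis using M0 B by simp
    qed
  qed
  have close: "\<bar>fractal x N \<alpha> L g t - Tcomp x N \<alpha> L g m g t\<bar> \<le> c ^ m * (2 * (B * (1 + c * M) / (1 - c)))"
    if lg: "lip_on d ?S g" and B: "0 \<le> B" and gB: "\<forall>t\<in>?S. \<bar>g t\<bar> \<le> B" and t: "t \<in> ?S" for g B m t
  proof -
    define R where "R = B * (1 + c * M) / (1 - c)"
    have RB: "B + c * (R + M * B) \<le> R" unfolding R_def using c by (simp add: field_simps)
    have "B * 1 \<le> B * ((1 + c * M) / (1 - c))" using B c M0
      by (intro mult_left_mono) (auto simp: field_simps)
    then have BR: "B \<le> R" unfolding R_def by simp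
    have hL: "\<forall>k. 1 \<le> k \<longrightarrow> (\<forall>s\<in>?S. \<bar>L k g s\<bar> \<le> M * B)" using LB lg B gB by blast
    have step: "\<bar>Tcomp x N \<alpha> L g (m + n) g t - Tcomp x N \<alpha> L g m g t\<bar> \<le> c ^ m * (2 * R)" for m n
    proof -
      have "\<forall>s\<in>?S. \<bar>Tsh x N \<alpha> L g m n g s\<bar> \<le> R"
        by (rule Tsh_bound[where x=x and N=N and L=L and f=g and Bb="M*B", OF N part ab _ gB hL RB]) (use c gB BR in auto)
      then have "\<forall>s\<in>?S. \<bar>Tsh x N \<alpha> L g m n g s - g s\<bar> \<le> 2 * R" using gB BR by force
      from Tcomp_contr[where x=x and N=N, OF N part ab _ this, of L g m] c t
      show ?thesis by (simp add: Tcomp_split)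
    qed
    have "0 \<le> R" using B BR by linarith
    then show ?thesis unfolding fractal_def R_def[symmetric]
      by (intro seq_lim[OF c]) (use step in auto)
  qed
  obtain Bf where Bf0: "0 \<le> Bf" and Bf: "\<forall>t\<in>?S. \<bar>f t\<bar> \<le> Bf" using bdd[OF lf] by blast
  define R1 where "R1 = (Bf + 1) * (1 + c * M) / (1 - c)"
  have "(\<lambda>n. c ^ n * (4 * R1)) \<longlonglongrightarrow> 0 * (4 * R1)"
    by (intro tendsto_intros LIMSEQ_power_zero) (use c in simp)
  then have "(\<lambda>n. c ^ n * (4 * R1)) \<longlonglongrightarrow> 0" by simp
  then have "\<forall>\<^sub>F n in sequentially. c ^ n * (4 * R1) < e / 2"
    by (rule order_tendstoD(2)) (use e in simp)
  then obtain K0 where K0: "c ^ K0 * (4 * R1) < e / 2" by (meson eventually_sequentially order_refl)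
  define \<eta> where "\<eta> = e * (1 - c) / 5"
  have \<eta>: "0 < \<eta>" unfolding \<eta>_def using e c by simp
  obtain \<delta>L where \<delta>L: "\<delta>L > 0" and h\<delta>L: "\<forall>k. 1 \<le> k \<and> k \<le> K0 \<longrightarrow>
      (\<forall>h. lip_on d ?S h \<and> sup_dist ?S f h < \<delta>L \<longrightarrow> sup_dist ?S (L k f) (L k h) < \<eta>)"
  proof -
    have "\<exists>\<delta>>(0::real). \<forall>k. 1 \<le> k \<and> k \<le> K0 \<longrightarrow>
      (\<forall>h. lip_on d ?S h \<and> sup_dist ?S f h < \<delta> \<longrightarrow> sup_dist ?S (L k f) (L k h) < \<eta>)"
      by (rule finite_delta) (use L_cont lf \<eta> in auto)
    then show ?thesis using that by blast
  qed
  show "\<exists>\<delta>>0. \<forall>h. lip_on d ?S h \<and> sup_dist ?S f h < \<delta> \<longrightarrow>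
            sup_dist ?S (fractal x N \<alpha> L f) (fractal x N \<alpha> L h) < e"
  proof (intro exI[of _ "min \<delta>L (min \<eta> 1)"] conjI allI impI)
    show "0 < min \<delta>L (min \<eta> 1)" using \<delta>L \<eta> by simp
    fix h assume "lip_on d ?S h \<and> sup_dist ?S f h < min \<delta>L (min \<eta> 1)"
    then have lh: "lip_on d ?S h" and fh: "sup_dist ?S f h < min \<delta>L (min \<eta> 1)" by auto
    have fhp: "\<forall>t\<in>?S. \<bar>f t - h t\<bar> \<le> \<eta>" using pt[OF lf lh] fh by force
    have fhp1: "\<forall>t\<in>?S. \<bar>f t - h t\<bar> \<le> 1" using pt[OF lf lh] fh by force
    have Bh: "\<forall>t\<in>?S. \<bar>h t\<bar> \<le> Bf + 1" using Bf fhp1 by force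
    have Bf1: "\<forall>t\<in>?S. \<bar>f t\<bar> \<le> Bf + 1" using Bf by force
    have Lk: "\<forall>k. 1 \<le> k \<and> k \<le> K0 \<longrightarrow> (\<forall>s\<in>?S. \<bar>L k f s - L k h s\<bar> \<le> \<eta>)"
    proof (intro allI impI ballI)
      fix k s assume k: "1 \<le> k \<and> k \<le> K0" and s: "s \<in> ?S"
      have "sup_dist ?S (L k f) (L k h) < \<eta>" using h\<delta>L k lh fh by auto
      then show "\<bar>L k f s - L k h s\<bar> \<le> \<eta>"
        using pt[of "L k f" "L k h" s] L_lip k lf lh s by force
    qed
    define X where "X = \<eta> * (1 + c) / (1 - c)"
    have X: "\<eta> + c * (X + \<eta>) \<le> X" unfolding X_def using c by (simp add: field_simps)
    have \<eta>X: "\<eta> \<le> X" unfolding X_def using c \<eta> by (simp add: field_simps)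
    have mid: "\<forall>s\<in>?S. \<bar>Tcomp x N \<alpha> L f K0 f s - Tcomp x N \<alpha> L h K0 h s\<bar> \<le> X"
      by (rule Tcomp_diff[where x=x and N=N, OF N part ab _ fhp Lk X]) (use c fhp \<eta>X in force)+
    have Xeq: "X = e * (1 + c) / 5" unfolding X_def \<eta>_def using c by (simp add: field_simps)
    have "e * c < e * 1" using c e by (intro mult_strict_left_mono) auto
    then have Xe: "X < e / 2" unfolding Xeq using e by (simp add: field_simps)
    have "sup_dist ?S (fractal x N \<alpha> L f) (fractal x N \<alpha> L h) \<le> c ^ K0 * (4 * R1) + X"
    proof (rule sup_le[OF Sne], intro ballI)
      fix t assume t: "t \<in> ?S"
      have 1: "\<bar>fractal x N \<alpha> L f t - Tcomp x N \<alpha> L f K0 f t\<bar> \<le> c ^ K0 * (2 * R1)"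
        using close[OF lf _ Bf1 t, of K0] Bf0 unfolding R1_def by simp
      have 2: "\<bar>fractal x N \<alpha> L h t - Tcomp x N \<alpha> L h K0 h t\<bar> \<le> c ^ K0 * (2 * R1)"
        using close[OF lh _ Bh t, of K0] Bf0 unfolding R1_def by simp
      have 3: "\<bar>Tcomp x N \<alpha> L f K0 f t - Tcomp x N \<alpha> L h K0 h t\<bar> \<le> X" using mid t by blast
      show "\<bar>fractal x N \<alpha> L f t - fractal x N \<alpha> L h t\<bar> \<le> c ^ K0 * (4 * R1) + X"
        using 1 2 3 by (simp add: algebra_simps)
    qed
    then show "sup_dist ?S (fractal x N \<alpha> L f) (fractal x N \<alpha> L h) < e" using K0 Xe by linarith
  qed
qed

end
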